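(* There exists a normal set $A \subseteq \mathbb{N}$ such that there are no $x,y,z \in A$ with $xy = z$.
   Context: $\mathbb{N} = \{1,2,3,\dots\}$. An infinite binary sequence $(\lambda_i)_{i \ge 1}$ is called normal if every finite binary word $\omega$ of length $|\omega|$ occurs in the sequence with asymptotic frequency $2^{-|\omega|}$, i.e. the number of $i \le N$ with $(\lambda_i,\dots,\lambda_{i+|\omega|-1}) = \omega$, divided by $N$, tends to $2^{-|\omega|}$ as $N \to \infty$. A set $B \subseteq \mathbb{N}$ is called normal if its indicator sequence ($\lambda_i = 1$ iff $i \in B$) is normal. *)

theory Defs
  imports Complex_Main
begin

text \<open>An infinite binary sequence indexed from 1 is represented by a function
  lam :: nat \<Rightarrow> bool (value at 0 irrelevant); True stands for 1.
  Occurrence of word w at position i: lam (i + j) = w ! j for all j < length w.\<close>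

definition occurs_at :: "(nat \<Rightarrow> bool) \<Rightarrow> bool list \<Rightarrow> nat \<Rightarrow> bool" where
  "occurs_at lam w i \<longleftrightarrow> (\<forall>j < length w. lam (i + j) = w ! j)"

definition normal_seq :: "(nat \<Rightarrow> bool) \<Rightarrow> bool" where
  "normal_seq lam \<longleftrightarrow>
     (\<forall>w :: bool list.
        (\<lambda>N. real (card {i \<in> {1..N}. occurs_at lam w i}) / real N)
          \<longlonglongrightarrow> (1 / 2) ^ length w)"

definition normal_set :: "nat set \<Rightarrow> bool" where
  "normal_set B \<longleftrightarrow> normal_seq (\<lambda>i. i \<in> B)"

end

theory Submission
  imports Defs "HOL-Computational_Algebra.Primes"
begin

definition hS :: "nat set \<Rightarrow> nat \<Rightarrow> nat" where
  "hS S r = size (filter_mset (\<lambda>p. p \<in> S) (prime_factorization r))"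

definition lam :: "nat set \<Rightarrow> nat \<Rightarrow> real" where
  "lam S r = (-1) ^ hS S r"

lemma hS_mult: "a \<noteq> 0 \<Longrightarrow> b \<noteq> 0 \<Longrightarrow> hS S (a * b) = hS S a + hS S b"
  by (simp add: hS_def prime_factorization_mult)

lemma lam_mult: "a \<noteq> 0 \<Longrightarrow> b \<noteq> 0 \<Longrightarrow> lam S (a * b) = lam S a * lam S b"
  by (simp add: lam_def hS_mult power_add)

lemma lam_1 [simp]: "lam S 1 = 1"
  unfolding lam_def hS_def by simp

lemma lam_Suc0 [simp]: "lam S (Suc 0) = 1"
  using lam_1 by simp

lemma lam_prod: "finite F \<Longrightarrow> (\<And>x. x \<in> F \<Longrightarrow> f x \<noteq> 0) \<Longrightarrow> lam S (\<Prod>x\<in>F. f x) = (\<Prod>x\<in>F. lam S (f x))"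
  by (induction F rule: finite_induct) (auto simp: lam_mult)

lemma lam_pm: "lam S r = 1 \<or> lam S r = -1"
  unfolding lam_def by (cases "even (hS S r)") auto

lemma lam_sq: "s \<noteq> 0 \<Longrightarrow> lam S (s * s) = 1"
proof -
  assume "s \<noteq> 0"
  then have "lam S (s*s) = lam S s * lam S s" by (simp add: lam_mult)
  then show ?thesis using lam_pm[of S s] by auto
qed

definition flip :: "nat set \<Rightarrow> nat \<Rightarrow> nat set" where
  "flip S p = (if p \<in> S then S - {p} else insert p S)"

lemma hS_flip:
  "hS (flip S p) r + hS S r = 2 * size (filter_mset (\<lambda>q. q \<in> S \<and> q \<noteq> p) (prime_factorization r))
      + count (prime_factorization r) p"
proof -
  let ?X = "prime_factorization r"
  have split: "filter_mset P X = filter_mset (\<lambda>q. P q \<and> q \<noteq> p) X + filter_mset (\<lambda>q. P q \<and> q = p) X" for P X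
    by (induction X) auto
  have e1: "filter_mset (\<lambda>q. q \<in> flip S p \<and> q \<noteq> p) ?X = filter_mset (\<lambda>q. q \<in> S \<and> q \<noteq> p) ?X"
    by (rule filter_mset_cong) (auto simp: flip_def)
  have e2: "filter_mset (\<lambda>q. q \<in> T \<and> q = p) ?X = (if p \<in> T then filter_mset (\<lambda>q. q = p) ?X else {#})" for T
    by (cases "p \<in> T") (auto intro: filter_mset_cong)
  show ?thesis
    unfolding hS_def
    apply (subst split[of "\<lambda>q. q \<in> flip S p"])
    apply (subst split[of "\<lambda>q. q \<in> S"])
    apply (simp only: e1 e2 filter_eq_replicate_mset size_union)
    apply (auto simp: flip_def)
    done
qed

lemma lam_flip:
  assumes "odd (count (prime_factorization r) p)"
  shows "lam (flip S p) r = - lam S r"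
proof -
  have "odd (hS (flip S p) r + hS S r)" using hS_flip[of S p r] assms by simp
  then have "odd (hS (flip S p) r) \<longleftrightarrow> even (hS S r)" by auto
  then show ?thesis by (auto simp: lam_def)
qed

lemma square_if_even:
  fixes r :: nat
  assumes "r > 0" "\<And>p. even (count (prime_factorization r) p)"
  shows "\<exists>s. r = s * s"
proof -
  define s where "s = (\<Prod>p \<in> prime_factors r. p ^ (multiplicity p r div 2))"
  have "s * s = (\<Prod>p \<in> prime_factors r. p ^ (multiplicity p r div 2) * p ^ (multiplicity p r div 2))"
    by (simp add: s_def prod.distrib)
  also have "\<dots> = (\<Prod>p \<in> prime_factors r. p ^ multiplicity p r)"
  proof (rule prod.cong[OF refl])
    fix p assume p: "p \<in> prime_factors r"
    then have "even (multiplicity p r)" using assms(2)[of p]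
      by (simp add: count_prime_factorization_prime in_prime_factors_iff)
    then show "p ^ (multiplicity p r div 2) * p ^ (multiplicity p r div 2) = p ^ multiplicity p r"
      by (metis add_self_div_2 even_two_times_div_two mult_2 power_add)
  qed
  also have "\<dots> = r" using prime_factorization_nat[OF assms(1)] by simp
  finally show ?thesis by metis
qed

lemma flip_flip: "flip (flip S p) p = S"
  unfolding flip_def by auto

lemma flip_Pow: "p < M \<Longrightarrow> S \<in> Pow {..<M} \<Longrightarrow> flip S p \<in> Pow {..<M}"
  unfolding flip_def by auto

lemma sum_lam:
  fixes r :: nat
  assumes "r > 0" "prime_factors r \<subseteq> {..<M}"
  shows "(\<Sum>S\<in>Pow {..<M}. lam S r) = (if \<exists>s. r = s * s then 2 ^ M else 0)"
proof (cases "\<exists>s. r = s * s")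
  case True
  then obtain s where s: "r = s * s" by auto
  with assms have "s \<noteq> 0" by auto
  then have "\<And>S. lam S r = 1" using s lam_sq by simp
  then have "(\<Sum>S\<in>Pow {..<M}. lam S r) = of_nat (card (Pow {..<M::nat}))" by simp
  also have "\<dots> = 2 ^ M" by (simp add: card_Pow)
  finally show ?thesis using True by simp
next
  case False
  then obtain p where p: "odd (count (prime_factorization r) p)"
    using square_if_even[OF assms(1)] by blast
  then have "count (prime_factorization r) p > 0" by (rule odd_pos)
  then have "p \<in> prime_factors r" by simp
  then have pM: "p < M" using assms(2) by auto
  have bij: "bij_betw (\<lambda>S. flip S p) (Pow {..<M}) (Pow {..<M})"
    by (rule bij_betw_byWitness[where f'="\<lambda>S. flip S p"]) (use pM in \<open>auto simp: flip_flip flip_def\<close>)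
  have "(\<Sum>S\<in>Pow {..<M}. lam S r) = (\<Sum>S\<in>Pow {..<M}. lam (flip S p) r)"
    using sum.reindex_bij_betw[OF bij, of "\<lambda>S. lam S r"] by simp
  also have "\<dots> = (\<Sum>S\<in>Pow {..<M}. - lam S r)"
    by (rule sum.cong[OF refl]) (rule lam_flip[OF p])
  also have "\<dots> = - (\<Sum>S\<in>Pow {..<M}. lam S r)"
    by (rule sum_negf)
  finally show ?thesis using False by simp
qed

definition Q :: "nat set \<Rightarrow> nat \<Rightarrow> nat" where
  "Q J n = (\<Prod>j\<in>J. n + j)"

definition issq :: "nat \<Rightarrow> bool" where
  "issq r \<longleftrightarrow> (\<exists>s. r = s * s)"

definition TT :: "nat set \<Rightarrow> nat \<Rightarrow> nat set \<Rightarrow> real" where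
  "TT J N S = (\<Sum>i\<in>{1..N}. \<Prod>j\<in>J. lam S (i + j))"

definition pairs :: "nat set \<Rightarrow> nat \<Rightarrow> real" where
  "pairs J N = (\<Sum>m\<in>{1..N}. \<Sum>n\<in>{1..N}. if issq (Q J n * Q J m) then 1 else 0)"

lemma Q_pos: "finite J \<Longrightarrow> n \<ge> 1 \<Longrightarrow> Q J n > 0"
  unfolding Q_def by (simp add: prod_pos)

lemma TT_Q: "finite J \<Longrightarrow> TT J N S = (\<Sum>i\<in>{1..N}. lam S (Q J i))"
  unfolding TT_def Q_def by (intro sum.cong refl lam_prod[symmetric]) auto

lemma pf_Q_bound:
  assumes "finite J" "J \<subseteq> {..<l}" "n \<ge> 1" "n \<le> N" "m \<ge> 1" "m \<le> N" "N + l \<le> M"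
  shows "prime_factors (Q J n * Q J m) \<subseteq> {..<M}"
proof
  fix p assume p: "p \<in> prime_factors (Q J n * Q J m)"
  then have pr: "prime p" and d: "p dvd Q J n * Q J m" by auto
  then have "p dvd Q J n \<or> p dvd Q J m" by (simp add: prime_dvd_mult_iff)
  then obtain k j where kj: "k \<in> {n, m}" "j \<in> J" "p dvd k + j"
    unfolding Q_def using prime_dvd_prod_iff[OF assms(1) pr] by blast
  then have "p \<le> k + j" using assms by (intro dvd_imp_le) auto
  moreover have "j < l" using kj assms(2) by auto
  moreover have "k \<le> N" using kj assms by auto
  ultimately show "p \<in> {..<M}" using assms(7) by auto
qed

lemma moment:
  assumes "finite J" "J \<subseteq> {..<l}" "N + l \<le> M"
  shows "(\<Sum>S\<in>Pow {..<M}. (TT J N S)^2) = 2 ^ M * pairs J N"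
proof -
  have "(\<Sum>S\<in>Pow {..<M}. (TT J N S)^2) =
        (\<Sum>S\<in>Pow {..<M}. \<Sum>m\<in>{1..N}. \<Sum>n\<in>{1..N}. lam S (Q J n * Q J m))"
  proof (rule sum.cong[OF refl])
    fix S
    have "(TT J N S)^2 = (\<Sum>n\<in>{1..N}. lam S (Q J n)) * (\<Sum>m\<in>{1..N}. lam S (Q J m))"
      by (simp add: TT_Q[OF assms(1)] power2_eq_square)
    also have "\<dots> = (\<Sum>m\<in>{1..N}. \<Sum>n\<in>{1..N}. lam S (Q J n) * lam S (Q J m))"
      by (subst sum.swap) (simp add: sum_product)
    also have "\<dots> = (\<Sum>m\<in>{1..N}. \<Sum>n\<in>{1..N}. lam S (Q J n * Q J m))"
      using Q_pos[OF assms(1)] by (intro sum.cong refl, subst lam_mult) auto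
    finally show "(TT J N S)^2 = \<dots>" .
  qed
  also have "\<dots> = (\<Sum>m\<in>{1..N}. \<Sum>n\<in>{1..N}. \<Sum>S\<in>Pow {..<M}. lam S (Q J n * Q J m))"
    by (simp add: sum.swap[of _ "Pow {..<M}"])
  also have "\<dots> = (\<Sum>m\<in>{1..N}. \<Sum>n\<in>{1..N}. 2 ^ M * (if issq (Q J n * Q J m) then 1 else 0))"
  proof (intro sum.cong refl)
    fix m n assume m: "m \<in> {1..N}" and n: "n \<in> {1..N}"
    have pos: "Q J n * Q J m > 0" using Q_pos[OF assms(1)] m n by auto
    show "(\<Sum>S\<in>Pow {..<M}. lam S (Q J n * Q J m)) = 2 ^ M * (if issq (Q J n * Q J m) then 1 else 0)"
      using sum_lam[OF pos pf_Q_bound[OF assms(1,2) _ _ _ _ assms(3)]] m n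
      by (simp add: issq_def)
  qed
  also have "\<dots> = 2 ^ M * pairs J N"
    by (simp add: pairs_def sum_distrib_left)
  finally show ?thesis .
qed

lemma chebyshev:
  fixes f :: "'a \<Rightarrow> real"
  assumes "finite A" "c > 0"
  shows "real (card {x\<in>A. c < \<bar>f x\<bar>}) * c^2 \<le> (\<Sum>x\<in>A. (f x)^2)"
proof -
  have "real (card {x\<in>A. c < \<bar>f x\<bar>}) * c^2 = (\<Sum>x\<in>{x\<in>A. c < \<bar>f x\<bar>}. c^2)" by simp
  also have "\<dots> \<le> (\<Sum>x\<in>{x\<in>A. c < \<bar>f x\<bar>}. (f x)^2)"
  proof (rule sum_mono)
    fix x assume "x \<in> {x\<in>A. c < \<bar>f x\<bar>}"
    then have "c < \<bar>f x\<bar>" by auto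
    then have "c^2 \<le> \<bar>f x\<bar>^2" using assms(2) by (intro power_mono) auto
    then show "c^2 \<le> (f x)^2" by simp
  qed
  also have "\<dots> \<le> (\<Sum>x\<in>A. (f x)^2)"
    by (rule sum_mono2) (use assms in auto)
  finally show ?thesis .
qed

definition oddset :: "nat \<Rightarrow> nat set" where
  "oddset r = {p \<in> prime_factors r. odd (multiplicity p r)}"

definition usq :: "nat \<Rightarrow> nat" where
  "usq r = (\<Prod>p\<in>prime_factors r. p ^ (multiplicity p r div 2))"

lemma oddpart_decomp:
  fixes r :: nat
  assumes "r > 0"
  shows "r = \<Prod>(oddset r) * (usq r)^2"
proof -
  have "r = (\<Prod>p\<in>prime_factors r. p ^ multiplicity p r)" using prime_factorization_nat[OF assms] .
  also have "\<dots> = (\<Prod>p\<in>prime_factors r. (if odd (multiplicity p r) then p else 1) * (p ^ (multiplicity p r div 2))^2)"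
  proof (rule prod.cong[OF refl])
    fix p
    have "p ^ multiplicity p r = p ^ (multiplicity p r mod 2) * p ^ (2 * (multiplicity p r div 2))"
      by (simp flip: power_add)
    then show "p ^ multiplicity p r = (if odd (multiplicity p r) then p else 1) * (p ^ (multiplicity p r div 2))^2"
      by (simp add: odd_iff_mod_2_eq_one power_mult[symmetric] mult.commute[of 2] power_even_eq)
  qed
  also have "\<dots> = (\<Prod>p\<in>prime_factors r. (if odd (multiplicity p r) then p else 1)) * (usq r)^2"
    by (simp add: prod.distrib usq_def prod_power_distrib)
  also have "(\<Prod>p\<in>prime_factors r. (if odd (multiplicity p r) then p else 1)) = \<Prod>(oddset r)"
    unfolding oddset_def by (simp add: prod.inter_filter)
  finally show ?thesis .
qed

lemma oddset_sub:
  assumes J: "finite J" "J \<subseteq> {..<l}" "j0 \<in> J" and nm: "n \<ge> 1" "m \<ge> 1"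
    and sq: "issq (Q J n * Q J m)"
  shows "oddset (n + j0) \<subseteq> prime_factors (fact l * Q J m)"
proof
  fix p assume "p \<in> oddset (n + j0)"
  then have pr: "prime p" and pd: "p dvd n + j0" and odd: "odd (multiplicity p (n + j0))"
    by (auto simp: oddset_def)
  have Qm: "Q J m > 0" using Q_pos[OF J(1) nm(2)] .
  have Qn: "Q J n > 0" using Q_pos[OF J(1) nm(1)] .
  show "p \<in> prime_factors (fact l * Q J m)"
  proof (cases "p \<le> l")
    case True
    then have "p dvd fact l" using pr by (intro dvd_fact) (auto simp: prime_gt_0_nat Suc_le_eq)
    then show ?thesis using pr Qm by (intro prime_factorsI) (auto simp: fact_nonzero)
  next
    case False
    have other: "\<not> p dvd n + j" if "j \<in> J" "j \<noteq> j0" for j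
    proof
      assume pj: "p dvd n + j"
      have jl: "j < l" "j0 < l" using that J by auto
      show False
      proof (cases "j < j0")
        case True
        then have "p dvd (n + j0) - (n + j)" using pj pd by (intro dvd_diff_nat)
        then have "p dvd j0 - j" by simp
        then have "p \<le> j0 - j" using True by (intro dvd_imp_le) auto
        then show False using False jl by auto
      next
        case False2: False
        then have lt: "j0 < j" using that by auto
        then have "p dvd (n + j) - (n + j0)" using pj pd by (intro dvd_diff_nat)
        then have "p dvd j - j0" by simp
        then have "p \<le> j - j0" using lt by (intro dvd_imp_le) auto
        then show False using False jl by auto
      qed
    qed
    have "multiplicity p (Q J n) = (\<Sum>j\<in>J. multiplicity p (n + j))"
      unfolding Q_def using pr nm J by (intro prime_elem_multiplicity_prod_distrib) auto
    also have "\<dots> = multiplicity p (n + j0)"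
    proof -
      have "(\<Sum>j\<in>J. multiplicity p (n + j)) = multiplicity p (n + j0) + (\<Sum>j\<in>J - {j0}. multiplicity p (n + j))"
        using J by (simp add: sum.remove)
      also have "(\<Sum>j\<in>J - {j0}. multiplicity p (n + j)) = 0"
        using other by (auto intro!: sum.neutral not_dvd_imp_multiplicity_0)
      finally show ?thesis by simp
    qed
    finally have mQn: "multiplicity p (Q J n) = multiplicity p (n + j0)" .
    obtain s where s: "Q J n * Q J m = s * s" using sq by (auto simp: issq_def)
    have "Q J n * Q J m > 0" using Qn Qm by simp
    then have s0: "s \<noteq> 0" unfolding s by (cases "s = 0") auto
    have "multiplicity p (Q J n) + multiplicity p (Q J m) = multiplicity p (s * s)"
      using Qn Qm pr unfolding s[symmetric] by (simp add: prime_elem_multiplicity_mult_distrib)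
    also have "\<dots> = 2 * multiplicity p s"
      using s0 pr by (simp add: prime_elem_multiplicity_mult_distrib)
    finally have "odd (multiplicity p (Q J m))" using mQn odd by presburger
    then have "multiplicity p (Q J m) > 0" by (rule odd_pos)
    then have "p dvd Q J m" using pr Qm by (simp add: prime_multiplicity_gt_zero_iff)
    then have "p dvd fact l * Q J m" by simp
    then show ?thesis using pr Qm by (intro prime_factorsI) (auto simp: fact_nonzero)
  qed
qed

lemma card_u:
  fixes d X :: nat
  assumes "d \<ge> 1"
  shows "real (card {u. 1 \<le> u \<and> d * u^2 \<le> X}) \<le> sqrt (X / d)"
proof -
  define K where "K = nat \<lfloor>sqrt (X / d)\<rfloor>"
  have sub: "{u. 1 \<le> u \<and> d * u^2 \<le> X} \<subseteq> {1..K}"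
  proof
    fix u assume "u \<in> {u. 1 \<le> u \<and> d * u^2 \<le> X}"
    then have u: "1 \<le> u" "d * u^2 \<le> X" by auto
    then have "real d * (real u)^2 \<le> real X" by (metis of_nat_le_iff of_nat_mult of_nat_power)
    then have "(real u)^2 \<le> X / d" using assms by (simp add: field_simps)
    then have "real u \<le> sqrt (X / d)" by (rule real_le_rsqrt)
    then have "u \<le> K" unfolding K_def by (rule le_nat_floor)
    then show "u \<in> {1..K}" using u by auto
  qed
  have "card {u. 1 \<le> u \<and> d * u^2 \<le> X} \<le> card {1..K}"
    by (rule card_mono[OF _ sub]) simp
  then have "real (card {u. 1 \<le> u \<and> d * u^2 \<le> X}) \<le> real K" by simp
  also have "real K \<le> sqrt (X / d)" unfolding K_def by (rule of_nat_floor) simp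
  finally show ?thesis .
qed

lemma sqrt_prod: "finite A \<Longrightarrow> sqrt (\<Prod>x\<in>A. f x) = (\<Prod>x\<in>A. sqrt (f x))"
  by (induction A rule: finite_induct) (auto simp: real_sqrt_mult)

lemma prod_primes_ge1: "finite S \<Longrightarrow> (\<forall>p\<in>S. prime p) \<Longrightarrow> \<Prod>S \<ge> (1::nat)"
proof (induction S rule: finite_induct)
  case (insert x F)
  then have "prime x" by simp
  then have "x > 0" by (rule prime_gt_0_nat)
  then have "x \<ge> 1" by simp
  moreover have "\<Prod>F \<ge> 1" using insert by simp
  ultimately show ?case using insert by (simp add: one_le_mult_iff)
qed simp

lemma count_m:
  assumes J: "finite J" "J \<subseteq> {..<l}" "j0 \<in> J" and m: "1 \<le> m"
  shows "real (card {n\<in>{1..N}. issq (Q J n * Q J m)}) \<le>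
           sqrt (real (N + l)) * (\<Prod>p\<in>prime_factors (fact l * Q J m). 1 + inverse (sqrt p))"
proof -
  define P where "P = prime_factors (fact l * Q J m)"
  define X where "X = N + l"
  define Sig where "Sig = (SIGMA S:Pow P. {u. 1 \<le> u \<and> \<Prod>S * u^2 \<le> X})"
  define g where "g = (\<lambda>(S, u). \<Prod>S * u^2 - j0)"
  have finP: "finite P" unfolding P_def by simp
  have primeP: "\<forall>p\<in>S. prime p" if "S \<in> Pow P" for S using that unfolding P_def by auto
  have j0l: "j0 < l" using J by auto
  have sub: "{n\<in>{1..N}. issq (Q J n * Q J m)} \<subseteq> g ` Sig"
  proof
    fix n assume n: "n \<in> {n\<in>{1..N}. issq (Q J n * Q J m)}"
    then have n1: "n \<ge> 1" "n \<le> N" and sq: "issq (Q J n * Q J m)" by auto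
    have pos: "n + j0 > 0" using n1 by simp
    have dec: "n + j0 = \<Prod>(oddset (n + j0)) * (usq (n + j0))^2" by (rule oddpart_decomp[OF pos])
    have "usq (n + j0) \<noteq> 0" using dec pos by (metis mult_0_right power_zero_numeral less_not_refl)
    then have u1: "1 \<le> usq (n + j0)" by simp
    have S: "oddset (n + j0) \<in> Pow P"
      unfolding P_def using oddset_sub[OF J n1(1) m sq] by simp
    have le: "\<Prod>(oddset (n + j0)) * (usq (n + j0))^2 \<le> X"
      using dec n1 j0l unfolding X_def by simp
    have "(oddset (n + j0), usq (n + j0)) \<in> Sig" unfolding Sig_def using S u1 le by auto
    moreover have "n = g (oddset (n + j0), usq (n + j0))" unfolding g_def using dec by simp
    ultimately show "n \<in> g ` Sig" by blast
  qed
  have finu: "finite {u. 1 \<le> u \<and> \<Prod>S * u^2 \<le> X}" if "S \<in> Pow P" for S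
  proof -
    have "\<Prod>S \<ge> 1" using prod_primes_ge1[OF _ primeP[OF that]] that finP by (meson PowD finite_subset)
    have "u \<le> X" if "1 \<le> u" "\<Prod>S * u^2 \<le> X" for u
    proof -
      have "u \<le> u^2" by (simp add: power2_eq_square)
      also have "\<dots> \<le> \<Prod>S * u^2" using \<open>\<Prod>S \<ge> 1\<close> by simp
      finally show ?thesis using that(2) by linarith
    qed
    then have "{u. 1 \<le> u \<and> \<Prod>S * u^2 \<le> X} \<subseteq> {..X}" by auto
    then show ?thesis by (rule finite_subset) simp
  qed
  have finSig: "finite Sig" unfolding Sig_def using finP finu by (intro finite_SigmaI) auto
  have "card {n\<in>{1..N}. issq (Q J n * Q J m)} \<le> card (g ` Sig)"
    by (rule card_mono[OF _ sub]) (use finSig in simp)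
  also have "\<dots> \<le> card Sig" by (rule card_image_le[OF finSig])
  also have "\<dots> = (\<Sum>S\<in>Pow P. card {u. 1 \<le> u \<and> \<Prod>S * u^2 \<le> X})"
    unfolding Sig_def using finP finu by (subst card_SigmaI) auto
  finally have cnat: "card {n\<in>{1..N}. issq (Q J n * Q J m)} \<le>
      (\<Sum>S\<in>Pow P. card {u. 1 \<le> u \<and> \<Prod>S * u^2 \<le> X})" .
  have "real (card {n\<in>{1..N}. issq (Q J n * Q J m)}) \<le>
      real (\<Sum>S\<in>Pow P. card {u. 1 \<le> u \<and> \<Prod>S * u^2 \<le> X})"
    using cnat by (simp only: of_nat_le_iff)
  also have "\<dots> = (\<Sum>S\<in>Pow P. real (card {u. 1 \<le> u \<and> \<Prod>S * u^2 \<le> X}))"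
    by (rule of_nat_sum)
  also have "\<dots> \<le> (\<Sum>S\<in>Pow P. sqrt X * (\<Prod>p\<in>S. inverse (sqrt p)))"
  proof (rule sum_mono)
    fix S assume S: "S \<in> Pow P"
    have finS: "finite S" using S finP by (meson PowD finite_subset)
    have ge1: "\<Prod>S \<ge> 1" using prod_primes_ge1[OF finS primeP[OF S]] .
    have "real (card {u. 1 \<le> u \<and> \<Prod>S * u^2 \<le> X}) \<le> sqrt (X / \<Prod>S)" by (rule card_u[OF ge1])
    also have "\<dots> = sqrt X * inverse (sqrt (\<Prod>p\<in>S. real p))"
      by (simp add: divide_inverse real_sqrt_mult real_sqrt_inverse)
    also have "\<dots> = sqrt X * (\<Prod>p\<in>S. inverse (sqrt p))"
      using prod_inversef[of "\<lambda>p. sqrt (real p)" S] by (simp add: sqrt_prod[OF finS] o_def)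
    finally show "real (card {u. 1 \<le> u \<and> \<Prod>S * u^2 \<le> X}) \<le> sqrt X * (\<Prod>p\<in>S. inverse (sqrt p))" .
  qed
  also have "\<dots> = sqrt X * (\<Sum>S\<in>Pow P. (\<Prod>p\<in>S. inverse (sqrt p)) * (\<Prod>p\<in>P - S. 1))"
    by (simp add: sum_distrib_left)
  also have "\<dots> = sqrt X * (\<Prod>p\<in>P. inverse (sqrt p) + 1)"
    by (simp add: prod_add[OF finP])
  finally show ?thesis unfolding X_def P_def by (simp add: add.commute)
qed

lemma ln_ge_half:
  assumes "x \<ge> (2::real)"
  shows "ln x \<ge> 1/2"
proof -
  have "ln (inverse x) \<le> inverse x - 1" using assms by (intro ln_le_minus_one) simp
  then have "- ln x \<le> inverse x - 1" using assms by (simp add: ln_inverse)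
  moreover have "inverse x \<le> 1/2" using assms by (simp add: field_simps)
  ultimately show ?thesis by linarith
qed

lemma factor_bound:
  fixes p l :: nat
  assumes l: "l \<ge> 1" and p: "p \<ge> 256 * l^2"
  shows "1 + inverse (sqrt p) \<le> real p powr (1 / (8 * l))"
proof -
  have lr: "real l \<ge> 1" using l by simp
  have pr: "real p \<ge> 256 * (real l)^2" using p by (metis of_nat_le_iff of_nat_mult of_nat_numeral of_nat_power)
  have p2: "real p \<ge> 2"
  proof -
    have "(real l)^2 \<ge> 1" using lr by simp
    then show ?thesis using pr by linarith
  qed
  have sq: "sqrt p \<ge> 16 * real l"
  proof -
    have "(16 * real l)^2 \<le> real p" using pr by (simp add: power_mult_distrib)
    then show ?thesis by (rule real_le_rsqrt)
  qed
  have "inverse (sqrt p) \<le> inverse (16 * real l)"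
    using sq lr by (intro le_imp_inverse_le) auto
  also have "\<dots> = (1 / (8 * l)) * (1/2)" by (simp add: field_simps)
  also have "\<dots> \<le> (1 / (8 * l)) * ln p"
    using ln_ge_half[OF p2] lr by (intro mult_left_mono) auto
  finally have "1 + inverse (sqrt p) \<le> 1 + (1 / (8 * l)) * ln p" by simp
  also have "\<dots> \<le> exp ((1 / (8 * l)) * ln p)" by (rule exp_ge_add_one_self)
  also have "\<dots> = real p powr (1 / (8 * l))" using p2 by (simp add: powr_def)
  finally show ?thesis .
qed

lemma prod_pf_le:
  fixes R :: nat
  assumes "R > 0"
  shows "(\<Prod>p\<in>prime_factors R. p) \<le> R"
proof -
  have "(\<Prod>p\<in>prime_factors R. p) \<le> (\<Prod>p\<in>prime_factors R. p ^ multiplicity p R)"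
  proof (rule prod_mono)
    fix p assume p: "p \<in> prime_factors R"
    then have "multiplicity p R > 0" using assms
      by (simp add: prime_multiplicity_gt_zero_iff in_prime_factors_iff)
    moreover have "p > 0" using prime_gt_0_nat[OF in_prime_factors_imp_prime[OF p]] .
    then have "p \<ge> 1" by simp
    ultimately show "0 \<le> p \<and> p \<le> p ^ multiplicity p R" by (simp add: self_le_power)
  qed
  also have "\<dots> = R" using prime_factorization_nat[OF assms] by simp
  finally show ?thesis .
qed

lemma prod_bound:
  fixes R l :: nat
  assumes l: "l \<ge> 1" and R: "R > 0"
  shows "(\<Prod>p\<in>prime_factors R. 1 + inverse (sqrt p)) \<le> 2 ^ (256 * l^2) * real R powr (1 / (8 * l))"
proof -
  define T where "T = 256 * l^2"
  define P where "P = prime_factors R"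
  define P1 where "P1 = {p\<in>P. p < T}"
  define P2 where "P2 = {p\<in>P. \<not> p < T}"
  have finP: "finite P" unfolding P_def by simp
  have PU: "P = P1 \<union> P2" "P1 \<inter> P2 = {}" unfolding P1_def P2_def by auto
  have fin12: "finite P1" "finite P2" unfolding P1_def P2_def using finP by auto
  have pos: "p > 0" if "p \<in> P" for p using that unfolding P_def by (meson in_prime_factors_imp_prime prime_gt_0_nat)
  have split: "(\<Prod>p\<in>P. 1 + inverse (sqrt p)) = (\<Prod>p\<in>P1. 1 + inverse (sqrt p)) * (\<Prod>p\<in>P2. 1 + inverse (sqrt p))"
    using PU fin12 by (simp add: prod.union_disjoint)
  have b1: "(\<Prod>p\<in>P1. 1 + inverse (sqrt p)) \<le> 2 ^ T"
  proof (rule prod_le_power)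
    fix p assume "p \<in> P1"
    then have "p \<ge> 1" using pos unfolding P1_def by (simp add: Suc_le_eq)
    then have "sqrt (real p) \<ge> 1" by simp
    then have "inverse (sqrt p) \<le> 1" by (simp add: inverse_le_1_iff)
    then show "0 \<le> 1 + inverse (sqrt (real p)) \<and> 1 + inverse (sqrt (real p)) \<le> 2" by simp
  next
    have "P1 \<subseteq> {..<T}" unfolding P1_def by auto
    then show "card P1 \<le> T" by (metis card_lessThan card_mono finite_lessThan)
  qed simp
  have b2: "(\<Prod>p\<in>P2. 1 + inverse (sqrt p)) \<le> (\<Prod>p\<in>P2. real p powr (1 / (8 * l)))"
  proof (rule prod_mono)
    fix p assume "p \<in> P2"
    then have "p \<ge> T" unfolding P2_def by simp
    then show "0 \<le> 1 + inverse (sqrt (real p)) \<and> 1 + inverse (sqrt (real p)) \<le> real p powr (1 / (8 * l))"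
      using factor_bound[OF l] unfolding T_def by auto
  qed
  also have "\<dots> = (\<Prod>p\<in>P2. real p) powr (1 / (8 * l))" by (simp add: prod_powr_distrib)
  also have "\<dots> \<le> real R powr (1 / (8 * l))"
  proof (rule powr_mono2)
    have "(\<Prod>p\<in>P2. p) \<le> (\<Prod>p\<in>P1. p) * (\<Prod>p\<in>P2. p)"
    proof -
      have "(\<Prod>p\<in>P1. p) \<ge> 1" using pos unfolding P1_def
        by (intro prod_ge_1) (auto simp: Suc_le_eq)
      then show ?thesis by simp
    qed
    also have "\<dots> = (\<Prod>p\<in>P. p)" using PU fin12 by (simp add: prod.union_disjoint)
    also have "\<dots> \<le> R" unfolding P_def by (rule prod_pf_le[OF R])
    finally have "(\<Prod>p\<in>P2. p) \<le> R" .
    then have "real (\<Prod>p\<in>P2. p) \<le> real R" by (simp only: of_nat_le_iff)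
    then show "(\<Prod>p\<in>P2. real p) \<le> real R" by simp
  qed (auto intro: prod_nonneg)
  finally have "(\<Prod>p\<in>P2. 1 + inverse (sqrt p)) \<le> real R powr (1 / (8 * l))" .
  then have "(\<Prod>p\<in>P1. 1 + inverse (sqrt p)) * (\<Prod>p\<in>P2. 1 + inverse (sqrt p)) \<le> 2 ^ T * real R powr (1 / (8 * l))"
    using b1 by (intro mult_mono) (auto intro!: prod_nonneg)
  then show ?thesis using split unfolding P_def T_def by simp
qed

lemma R_bound:
  assumes J: "finite J" "J \<subseteq> {..<l}" and m: "m \<le> N"
  shows "fact l * Q J m \<le> (l * (N + l)) ^ l"
proof -
  have "fact l \<le> l ^ l" using fact_le_power[of l, where 'a=nat] by simp
  moreover have "Q J m \<le> (N + l) ^ l"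
  proof -
    have "Q J m \<le> (\<Prod>j\<in>J. N + l)" unfolding Q_def
      using J m by (intro prod_mono) auto
    also have "\<dots> = (N + l) ^ card J" by simp
    also have "\<dots> \<le> (N + l) ^ l"
    proof (cases "N + l = 0")
      case False
      have "card J \<le> l" using card_mono[OF _ J(2)] by simp
      then show ?thesis using False by (intro power_increasing) auto
    qed (use J in auto)
    finally show ?thesis .
  qed
  ultimately have "fact l * Q J m \<le> l ^ l * (N + l) ^ l" by (intro mult_mono) auto
  also have "\<dots> = (l * (N + l)) ^ l" by (simp add: power_mult_distrib)
  finally show ?thesis .
qed

lemma pairs_bound:
  assumes J: "finite J" "J \<subseteq> {..<l}" "J \<noteq> {}" and l: "l \<ge> 1"
  shows "pairs J N \<le> N * (sqrt (real (N + l)) * (2 ^ (256 * l^2) * real (l * (N + l)) powr (1/8)))"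
proof -
  obtain j0 where j0: "j0 \<in> J" using J(3) by auto
  define B where "B = sqrt (real (N + l)) * (2 ^ (256 * l^2) * real (l * (N + l)) powr (1/8))"
  have "pairs J N = (\<Sum>m\<in>{1..N}. real (card {n\<in>{1..N}. issq (Q J n * Q J m)}))"
    unfolding pairs_def by (intro sum.cong refl) (simp add: sum.inter_filter[symmetric])
  also have "\<dots> \<le> (\<Sum>m\<in>{1..N}. B)"
  proof (rule sum_mono)
    fix m assume m: "m \<in> {1..N}"
    define R where "R = fact l * Q J m"
    have R0: "R > 0" unfolding R_def using Q_pos[OF J(1)] m by simp
    have mN: "m \<le> N" using m by simp
    have Rle: "real R \<le> real ((l * (N + l)) ^ l)"
      using R_bound[OF J(1,2) mN] unfolding R_def by (simp only: of_nat_le_iff)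
    have pw1: "real R powr (1 / (8 * l)) \<le> real ((l * (N + l)) ^ l) powr (1 / (8 * l))"
      by (rule powr_mono2) (use Rle in auto)
    have pw2: "real ((l * (N + l)) ^ l) powr (1 / (8 * l)) = real (l * (N + l)) powr (1/8)"
    proof -
      have pos: "real (l * (N + l)) > 0" using l by simp
      have "real ((l * (N + l)) ^ l) = real (l * (N + l)) powr (real l)"
        using pos by (simp add: powr_realpow)
      then have "real ((l * (N + l)) ^ l) powr (1 / (8 * l)) = real (l * (N + l)) powr (real l * (1 / (8 * l)))"
        by (simp add: powr_powr)
      moreover have "real l * (1 / real (8 * l)) = 1/8" using l by simp
      ultimately show ?thesis by simp
    qed
    have "real (card {n\<in>{1..N}. issq (Q J n * Q J m)}) \<le>
           sqrt (real (N + l)) * (\<Prod>p\<in>prime_factors R. 1 + inverse (sqrt p))"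
      unfolding R_def using count_m[OF J(1,2) j0] m by simp
    also have "\<dots> \<le> sqrt (real (N + l)) * (2 ^ (256 * l^2) * real R powr (1 / (8 * l)))"
      by (intro mult_left_mono prod_bound[OF l R0]) simp
    also have "\<dots> \<le> sqrt (real (N + l)) * (2 ^ (256 * l^2) * real (l * (N + l)) powr (1/8))"
      using pw1 pw2 by (intro mult_left_mono) auto
    finally show "real (card {n\<in>{1..N}. issq (Q J n * Q J m)}) \<le> B"
      unfolding B_def by (simp add: mult_left_mono)
  qed
  also have "\<dots> = N * B" by simp
  finally show ?thesis unfolding B_def .
qed

lemma pairs_t:
  assumes J: "finite J" "J \<subseteq> {..<l}" "J \<noteq> {}" and l: "l \<ge> 1" and t: "t \<ge> 2" "l \<le> t"
  shows "pairs J (t^16) \<le> 2 ^ (256 * l^2 + 1) * real t ^ 27"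
proof -
  have t16: "t \<le> t^16" using t by (simp add: self_le_power)
  have a: "t^16 + l \<le> (2 * t^8)^2"
  proof -
    have "t^16 + l \<le> 2 * t^16" using t t16 by simp
    also have "\<dots> \<le> 4 * t^16" by simp
    also have "\<dots> = (2 * t^8)^2" by (simp add: power_mult_distrib flip: power_mult)
    finally show ?thesis .
  qed
  have sq: "sqrt (real (t^16 + l)) \<le> 2 * real t ^ 8"
  proof (rule real_le_lsqrt)
    have "real (t^16 + l) \<le> real ((2 * t^8)^2)" using a by (simp only: of_nat_le_iff)
    then show "real (t^16 + l) \<le> (2 * real t ^ 8)^2" by simp
  qed simp
  have b: "l * (t^16 + l) \<le> t^24"
  proof -
    have "l * (t^16 + l) \<le> t * (2 * t^16)" using t t16 by (intro mult_mono) auto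
    also have "\<dots> = 2 * t^17" using power_add[of t 1 16] by simp
    also have "\<dots> \<le> t^7 * t^17"
    proof -
      have "t \<le> t^7" using t by (intro self_le_power) auto
      then have "2 \<le> t^7" using t by linarith
      then show ?thesis by (intro mult_right_mono) auto
    qed
    also have "\<dots> = t^24" by (simp flip: power_add)
    finally show ?thesis .
  qed
  have pw: "real (l * (t^16 + l)) powr (1/8) \<le> real t ^ 3"
  proof -
    have "real (l * (t^16 + l)) powr (1/8) \<le> real (t^24) powr (1/8)"
      by (rule powr_mono2) (use b in \<open>auto simp only: of_nat_le_iff\<close>)
    also have "real (t^24) powr (1/8) = real t ^ 3"
    proof -
      have tpos: "real t > 0" using t by simp
      have a: "real t powr (real 24) = real t ^ 24" by (rule powr_realpow[OF tpos])
      have b: "real t powr (real 3) = real t ^ 3" by (rule powr_realpow[OF tpos])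
      have "real (t^24) powr (1/8) = (real t powr (real 24)) powr (1/8)" by (simp only: a of_nat_power)
      also have "\<dots> = real t powr (real 24 * (1/8))" by (rule powr_powr)
      also have "real 24 * (1/8) = real 3" by simp
      finally show ?thesis using b by simp
    qed
    finally show ?thesis .
  qed
  have "pairs J (t^16) \<le> real (t^16) * (sqrt (real (t^16 + l)) * (2 ^ (256 * l^2) * real (l * (t^16 + l)) powr (1/8)))"
    by (rule pairs_bound[OF J l])
  also have "\<dots> \<le> real (t^16) * ((2 * real t ^ 8) * (2 ^ (256 * l^2) * real t ^ 3))"
    using sq pw by (intro mult_left_mono mult_mono) auto
  also have "\<dots> = 2 ^ (256 * l^2 + 1) * real t ^ 27"
    by (simp add: power_add algebra_simps flip: power_add)
  finally show ?thesis .
qed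

definition Tl :: "nat \<Rightarrow> nat" where
  "Tl l = 2 ^ (2 * l + 256 * l^2 + 3)"

definition Bad :: "nat \<Rightarrow> nat \<Rightarrow> nat set set" where
  "Bad l t = {S. \<exists>J\<in>Pow {..<l}. J \<noteq> {} \<and> real (t^15) < \<bar>TT J (t^16) S\<bar>}"

lemma Tl_ge: "l \<le> Tl l" "2 \<le> Tl l"
proof -
  have "l < 2 ^ l" by (rule less_exp)
  also have "2 ^ l \<le> (2::nat) ^ (2 * l + 256 * l^2 + 3)" by (intro power_increasing) auto
  finally show "l \<le> Tl l" unfolding Tl_def by simp
  have "(2::nat) ^ 1 \<le> 2 ^ (2 * l + 256 * l^2 + 3)" by (intro power_increasing) auto
  then show "2 \<le> Tl l" unfolding Tl_def by simp
qed

lemma final_arith: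
  fixes t c :: nat
  assumes "t \<ge> 2 ^ (c + 1)"
  shows "2 ^ c * (t * (t + 1)) \<le> t ^ 3"
proof -
  have "(1::nat) \<le> 2 ^ (c + 1)" by simp
  then have "t + 1 \<le> 2 * t" using assms by linarith
  then have "2 ^ c * (t * (t + 1)) \<le> 2 ^ c * (t * (2 * t))" by simp
  also have "\<dots> = (2 ^ (c + 1) * t) * t" by (simp add: algebra_simps)
  also have "\<dots> \<le> (t * t) * t" using assms by simp
  also have "\<dots> = t ^ 3" by (simp add: power3_eq_cube)
  finally show ?thesis .
qed

lemma bad_bound:
  assumes l: "l \<ge> 1" and t: "t \<ge> Tl l" and M: "t^16 + l \<le> M"
  shows "real (card (Bad l t \<inter> Pow {..<M})) \<le> 2 ^ M / (2 ^ (l + 1) * (real t * (real t + 1)))"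
proof -
  define N where "N = t^16"
  define c where "c = real (t^15)"
  define JJ where "JJ = Pow {..<l} - {{}}"
  have t2: "t \<ge> 2" "l \<le> t" using t Tl_ge[of l] by auto
  have cpos: "c > 0" unfolding c_def using t2 by simp
  have finJJ: "finite JJ" unfolding JJ_def by simp
  have cardJJ: "card JJ \<le> 2 ^ l"
  proof -
    have "card JJ \<le> card (Pow {..<l})" unfolding JJ_def by (rule card_mono) auto
    then show ?thesis by (simp add: card_Pow)
  qed
  have eq: "Bad l t \<inter> Pow {..<M} = (\<Union>J\<in>JJ. {S\<in>Pow {..<M}. c < \<bar>TT J N S\<bar>})"
    unfolding Bad_def JJ_def N_def c_def by auto
  have each: "real (card {S\<in>Pow {..<M}. c < \<bar>TT J N S\<bar>}) \<le> 2 ^ M * (2 ^ (256 * l^2 + 1) / real t ^ 3)"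
    if J: "J \<in> JJ" for J
  proof -
    have J': "finite J" "J \<subseteq> {..<l}" "J \<noteq> {}" using J unfolding JJ_def by (auto intro: finite_subset)
    have "real (card {S\<in>Pow {..<M}. c < \<bar>TT J N S\<bar>}) * c^2 \<le> (\<Sum>S\<in>Pow {..<M}. (TT J N S)^2)"
      by (rule chebyshev) (use cpos in auto)
    also have "\<dots> = 2 ^ M * pairs J N" using moment[OF J'(1,2)] M unfolding N_def by simp
    also have "\<dots> \<le> 2 ^ M * (2 ^ (256 * l^2 + 1) * real t ^ 27)"
      unfolding N_def using pairs_t[OF J' l t2] by simp
    finally have ineq: "real (card {S\<in>Pow {..<M}. c < \<bar>TT J N S\<bar>}) * c^2 \<le> 2 ^ M * (2 ^ (256 * l^2 + 1) * real t ^ 27)" .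
    have c2: "c^2 = real t ^ 3 * real t ^ 27" unfolding c_def by (simp flip: power_add power_mult)
    have tp: "real t ^ 27 > 0" "real t ^ 3 > 0" using t2 by auto
    from ineq have "real (card {S\<in>Pow {..<M}. c < \<bar>TT J N S\<bar>}) * real t ^ 3 * real t ^ 27 \<le> 2 ^ M * 2 ^ (256 * l^2 + 1) * real t ^ 27"
      unfolding c2 by (simp add: algebra_simps)
    then have "real (card {S\<in>Pow {..<M}. c < \<bar>TT J N S\<bar>}) * real t ^ 3 \<le> 2 ^ M * 2 ^ (256 * l^2 + 1)"
      using tp by (simp add: mult_le_cancel_right)
    then show ?thesis using tp by (simp add: field_simps)
  qed
  have "card (Bad l t \<inter> Pow {..<M}) \<le> (\<Sum>J\<in>JJ. card {S\<in>Pow {..<M}. c < \<bar>TT J N S\<bar>})"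
    unfolding eq by (rule card_UN_le[OF finJJ])
  then have "real (card (Bad l t \<inter> Pow {..<M})) \<le> real (\<Sum>J\<in>JJ. card {S\<in>Pow {..<M}. c < \<bar>TT J N S\<bar>})"
    by (simp only: of_nat_le_iff)
  also have "\<dots> = (\<Sum>J\<in>JJ. real (card {S\<in>Pow {..<M}. c < \<bar>TT J N S\<bar>}))"
    by (rule of_nat_sum)
  also have "\<dots> \<le> (\<Sum>J\<in>JJ. 2 ^ M * (2 ^ (256 * l^2 + 1) / real t ^ 3))"
    by (rule sum_mono) (rule each)
  also have "\<dots> = real (card JJ) * (2 ^ M * (2 ^ (256 * l^2 + 1) / real t ^ 3))" by simp
  also have "\<dots> \<le> 2 ^ l * (2 ^ M * (2 ^ (256 * l^2 + 1) / real t ^ 3))"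
    using cardJJ by (intro mult_right_mono) (auto simp: of_nat_le_iff[symmetric])
  also have "\<dots> \<le> 2 ^ M / (2 ^ (l + 1) * (real t * (real t + 1)))"
  proof -
    define cc where "cc = 2 * l + 256 * l^2 + 2"
    have e: "(2::nat) ^ (cc + 1) = Tl l" unfolding Tl_def cc_def
      by (rule arg_cong[where f="\<lambda>k. (2::nat) ^ k"]) simp
    have tc: "t \<ge> 2 ^ (cc + 1)" using t e by simp
    have "2 ^ cc * (t * (t + 1)) \<le> t ^ 3" by (rule final_arith[OF tc])
    then have "real (2 ^ cc * (t * (t + 1))) \<le> real (t ^ 3)" by (simp only: of_nat_le_iff)
    then have A: "2 ^ cc * (real t * (real t + 1)) \<le> real t ^ 3" by (simp add: algebra_simps)
    have tp: "real t ^ 3 > 0" "real t * (real t + 1) > 0" using t2 by auto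
    have eqc: "(2::real) ^ cc = 2 ^ l * 2 ^ (256 * l^2 + 1) * 2 ^ (l + 1)"
      unfolding cc_def by (simp flip: power_add)
    define X :: real where "X = 2 ^ l * 2 ^ (256 * l^2 + 1)"
    define D :: real where "D = 2 ^ (l + 1) * (real t * (real t + 1))"
    have Dpos: "D > 0" unfolding D_def using tp by simp
    have XD: "X * D \<le> real t ^ 3" unfolding X_def D_def using A eqc by (simp add: algebra_simps)
    have "2 ^ M * X * D \<le> 2 ^ M * real t ^ 3" using XD by (simp add: mult.assoc)
    then have "2 ^ M * X \<le> 2 ^ M * real t ^ 3 / D" using Dpos by (intro mult_imp_le_div_pos) auto
    also have "\<dots> = 2 ^ M / D * real t ^ 3" by simp
    finally have fin: "2 ^ M * X / real t ^ 3 \<le> 2 ^ M / D" using tp by (intro mult_imp_div_pos_le) auto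
    have L: "2 ^ l * (2 ^ M * (2 ^ (256 * l^2 + 1) / real t ^ 3)) = 2 ^ M * X / real t ^ 3"
      unfolding X_def by (simp add: ac_simps)
    show ?thesis unfolding D_def[symmetric] L by (rule fin)
  qed
  finally show ?thesis .
qed

primrec kpath :: "(nat \<Rightarrow> nat set \<Rightarrow> bool) \<Rightarrow> nat \<Rightarrow> nat set" where
  "kpath g 0 = {}"
| "kpath g (Suc n) = (if g (Suc n) (insert n (kpath g n)) then insert n (kpath g n) else kpath g n)"

lemma kpath_sub: "kpath g n \<subseteq> {..<n}"
  by (induction n) auto

lemma kpath_restrict: "k \<le> n \<Longrightarrow> kpath g n \<inter> {..<k} = kpath g k"
proof (induction n)
  case 0 then show ?case by simp
next
  case (Suc n)
  show ?case
  proof (cases "k = Suc n")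
    case True
    then show ?thesis using kpath_sub[of g "Suc n"] by auto
  next
    case False
    then have kn: "k \<le> n" using Suc.prems by simp
    have "kpath g (Suc n) \<inter> {..<k} = kpath g n \<inter> {..<k}" using kn by auto
    then show ?thesis using Suc.IH[OF kn] by simp
  qed
qed

lemma koenig:
  fixes B :: "'i \<Rightarrow> nat set set" and m :: "'i \<Rightarrow> nat"
  assumes dep: "\<And>i S S'. i \<in> I \<Longrightarrow> S \<inter> {..<m i} = S' \<inter> {..<m i} \<Longrightarrow> S \<in> B i \<Longrightarrow> S' \<in> B i"
    and fin: "\<And>F. finite F \<Longrightarrow> F \<subseteq> I \<Longrightarrow> \<exists>S. \<forall>i\<in>F. S \<notin> B i"
  shows "\<exists>S. \<forall>i\<in>I. S \<notin> B i"
proof -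
  define good where "good = (\<lambda>n T. \<forall>F. finite F \<and> F \<subseteq> I \<longrightarrow> (\<exists>S. S \<inter> {..<n} = T \<inter> {..<n} \<and> (\<forall>i\<in>F. S \<notin> B i)))"
  define P where "P = kpath good"
  have goodP: "good n (P n)" for n
  proof (induction n)
    case 0
    show ?case unfolding good_def using fin by auto
  next
    case (Suc n)
    have Psub: "P n \<subseteq> {..<n}" unfolding P_def by (rule kpath_sub)
    show ?case
    proof (cases "good (Suc n) (insert n (P n))")
      case True
      then show ?thesis unfolding P_def by simp
    next
      case False
      have eqP: "P (Suc n) = P n" using False unfolding P_def by simp
      show ?thesis
      proof (rule ccontr)
        assume nG: "\<not> good (Suc n) (P (Suc n))"
        obtain F1 where F1: "finite F1" "F1 \<subseteq> I"
          "\<not> (\<exists>S. S \<inter> {..<Suc n} = insert n (P n) \<inter> {..<Suc n} \<and> (\<forall>i\<in>F1. S \<notin> B i))"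
          using False unfolding good_def by auto
        obtain F2 where F2: "finite F2" "F2 \<subseteq> I"
          "\<not> (\<exists>S. S \<inter> {..<Suc n} = P n \<inter> {..<Suc n} \<and> (\<forall>i\<in>F2. S \<notin> B i))"
          using nG eqP unfolding good_def by auto
        have FF: "finite (F1 \<union> F2) \<and> F1 \<union> F2 \<subseteq> I" using F1(1,2) F2(1,2) by simp
        obtain S where S: "S \<inter> {..<n} = P n \<inter> {..<n}" "\<forall>i\<in>F1 \<union> F2. S \<notin> B i"
          using Suc.IH[unfolded good_def, rule_format, OF FF] by blast
        show False
        proof (cases "n \<in> S")
          case True
          have "S \<inter> {..<Suc n} = insert n (P n) \<inter> {..<Suc n}"
          proof -
            have "S \<inter> {..<Suc n} = insert n (S \<inter> {..<n})" using True by auto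
            also have "\<dots> = insert n (P n)" using S(1) Psub by auto
            also have "\<dots> = insert n (P n) \<inter> {..<Suc n}" using Psub by auto
            finally show ?thesis .
          qed
          moreover have "\<forall>i\<in>F1. S \<notin> B i" using S(2) by simp
          ultimately show False using F1(3) by blast
        next
          case False
          have "S \<inter> {..<Suc n} = P n \<inter> {..<Suc n}"
          proof -
            have "S \<inter> {..<Suc n} = S \<inter> {..<n}" using False less_Suc_eq by auto
            also have "\<dots> = P n" using S(1) Psub by auto
            also have "\<dots> = P n \<inter> {..<Suc n}" using Psub by auto
            finally show ?thesis .
          qed
          moreover have "\<forall>i\<in>F2. S \<notin> B i" using S(2) by simp
          ultimately show False using F2(3) by blast
        qed
      qed
    qed
  qed
  define Sstar where "Sstar = {k. k \<in> P (Suc k)}"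
  have Sres: "Sstar \<inter> {..<n} = P n" for n
  proof
    show "Sstar \<inter> {..<n} \<subseteq> P n"
    proof
      fix k assume k: "k \<in> Sstar \<inter> {..<n}"
      then have k1: "k \<in> P (Suc k)" "Suc k \<le> n" unfolding Sstar_def by auto
      have r: "P n \<inter> {..<Suc k} = P (Suc k)" using kpath_restrict[OF k1(2), of good] unfolding P_def .
      show "k \<in> P n" using k1(1) unfolding r[symmetric] by simp
    qed
  next
    show "P n \<subseteq> Sstar \<inter> {..<n}"
    proof
      fix k assume k: "k \<in> P n"
      have "P n \<subseteq> {..<n}" unfolding P_def by (rule kpath_sub)
      then have kn: "k < n" using k by auto
      then have kn': "Suc k \<le> n" by simp
      have r: "P n \<inter> {..<Suc k} = P (Suc k)" using kpath_restrict[OF kn', of good] unfolding P_def .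
      have "k \<in> P n \<inter> {..<Suc k}" using k by simp
      then have "k \<in> P (Suc k)" unfolding r .
      then show "k \<in> Sstar \<inter> {..<n}" using kn unfolding Sstar_def by auto
    qed
  qed
  have "\<forall>i\<in>I. Sstar \<notin> B i"
  proof
    fix i assume i: "i \<in> I"
    have Fi: "finite {i} \<and> {i} \<subseteq> I" using i by simp
    obtain S where S: "S \<inter> {..<m i} = P (m i) \<inter> {..<m i}" "\<forall>j\<in>{i}. S \<notin> B j"
      using goodP[of "m i", unfolded good_def, rule_format, OF Fi] by blast
    have "P (m i) \<subseteq> {..<m i}" unfolding P_def by (rule kpath_sub)
    then have eq: "Sstar \<inter> {..<m i} = S \<inter> {..<m i}" using S(1) Sres[of "m i"] by auto
    show "Sstar \<notin> B i"
    proof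
      assume "Sstar \<in> B i"
      then have "S \<in> B i" by (rule dep[OF i eq])
      then show False using S(2) by simp
    qed
  qed
  then show ?thesis by blast
qed

lemma lam_dep:
  assumes "S \<inter> {..<M} = S' \<inter> {..<M}" "r < M"
  shows "lam S r = lam S' r"
proof -
  have "filter_mset (\<lambda>p. p \<in> S) (prime_factorization r) = filter_mset (\<lambda>p. p \<in> S') (prime_factorization r)"
  proof (rule filter_mset_cong[OF refl])
    fix p assume p: "p \<in># prime_factorization r"
    then have "r \<noteq> 0" "p dvd r" by (auto simp: in_prime_factors_iff)
    then have "p \<le> r" by (intro dvd_imp_le) auto
    then have "p < M" using assms(2) by simp
    then show "(p \<in> S) = (p \<in> S')" using assms(1) by blast
  qed
  then show ?thesis unfolding lam_def hS_def by simp
qed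

lemma TT_dep:
  assumes "J \<subseteq> {..<l}" "S \<inter> {..<N + l} = S' \<inter> {..<N + l}"
  shows "TT J N S = TT J N S'"
  unfolding TT_def
proof (intro sum.cong refl prod.cong)
  fix i j assume "i \<in> {1..N}" "j \<in> J"
  then have "i + j < N + l" using assms(1) by auto
  then show "lam S (i + j) = lam S' (i + j)" by (rule lam_dep[OF assms(2)])
qed

lemma Bad_dep:
  assumes "S \<inter> {..<t^16 + l} = S' \<inter> {..<t^16 + l}" "S \<in> Bad l t"
  shows "S' \<in> Bad l t"
proof -
  obtain J where J: "J \<in> Pow {..<l}" "J \<noteq> {}" "real (t^15) < \<bar>TT J (t^16) S\<bar>"
    using assms(2) unfolding Bad_def by auto
  have "TT J (t^16) S = TT J (t^16) S'" using J(1) assms(1) by (intro TT_dep[of J l]) auto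
  then show ?thesis using J unfolding Bad_def by auto
qed

lemma geo_sum: "(\<Sum>l\<in>{1..L}. (1/2::real)^(l+1)) = 1/2 - (1/2)^(L+1)"
  by (induction L) (auto simp: atLeastAtMostSuc_conv)

lemma frac_split:
  assumes "t \<ge> (1::nat)"
  shows "1 / (real t * (real t + 1)) = 1 / real t - 1 / (real t + 1)"
proof -
  have "real t \<noteq> 0" "real t + 1 \<noteq> 0" using assms by auto
  then show ?thesis by (simp add: field_simps)
qed

lemma tele_sum0: "(\<Sum>t\<in>{1..T}. 1 / real t - 1 / (real t + 1)) = 1 - 1 / (real T + 1)"
proof (induction T)
  case 0 then show ?case by simp
next
  case (Suc T)
  have "(\<Sum>t\<in>{1..Suc T}. 1 / real t - 1 / (real t + 1)) =
        (\<Sum>t\<in>{1..T}. 1 / real t - 1 / (real t + 1)) + (1 / real (Suc T) - 1 / (real (Suc T) + 1))"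
    by (simp add: atLeastAtMostSuc_conv)
  also have "\<dots> = 1 - 1 / (real (Suc T) + 1)" using Suc by simp
  finally show ?case .
qed

lemma tele_sum: "(\<Sum>t\<in>{1..T}. 1 / (real t * (real t + 1))) = 1 - 1 / (real T + 1)"
proof -
  have "(\<Sum>t\<in>{1..T}. 1 / (real t * (real t + 1))) = (\<Sum>t\<in>{1..T}. 1 / real t - 1 / (real t + 1))"
    by (intro sum.cong refl frac_split) auto
  then show ?thesis using tele_sum0 by simp
qed

definition Iset :: "(nat \<times> nat) set" where
  "Iset = {(l, t). 1 \<le> l \<and> Tl l \<le> t}"

lemma weights_lt1:
  assumes "finite F" "F \<subseteq> Iset"
  shows "(\<Sum>(l, t)\<in>F. 1 / (2 ^ (l + 1) * (real t * (real t + 1)))) < 1"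
proof -
  obtain L where L: "\<forall>x\<in>fst ` F. x \<le> L" using assms(1) finite_nat_set_iff_bounded_le by blast
  obtain T where T: "\<forall>x\<in>snd ` F. x \<le> T" using assms(1) finite_nat_set_iff_bounded_le by blast
  have sub: "F \<subseteq> {1..L} \<times> {1..T}"
  proof
    fix x assume x: "x \<in> F"
    obtain l t where lt: "x = (l, t)" by (cases x)
    have "1 \<le> l" "Tl l \<le> t" using x lt assms(2) unfolding Iset_def by auto
    moreover have "2 \<le> Tl l" by (rule Tl_ge)
    moreover have "l \<le> L" "t \<le> T" using L T x lt by force+
    ultimately show "x \<in> {1..L} \<times> {1..T}" using lt by auto
  qed
  have "(\<Sum>(l, t)\<in>F. 1 / (2 ^ (l + 1) * (real t * (real t + 1)))) \<le>
        (\<Sum>(l, t)\<in>{1..L} \<times> {1..T}. 1 / (2 ^ (l + 1) * (real t * (real t + 1))))"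
    by (rule sum_mono2[OF _ sub]) auto
  also have "\<dots> = (\<Sum>l\<in>{1..L}. \<Sum>t\<in>{1..T}. (1/2)^(l+1) * (1 / (real t * (real t + 1))))"
    by (subst sum.cartesian_product[symmetric]) (simp add: power_one_over field_simps)
  also have "\<dots> = (\<Sum>l\<in>{1..L}. (1/2)^(l+1)) * (\<Sum>t\<in>{1..T}. 1 / (real t * (real t + 1)))"
    by (simp add: sum_product)
  also have "\<dots> = (1/2 - (1/2)^(L+1)) * (1 - 1 / (real T + 1))"
    by (simp only: geo_sum tele_sum)
  also have "\<dots> < 1"
  proof -
    have a: "0 \<le> 1/2 - (1/2::real)^(L+1)" "1/2 - (1/2::real)^(L+1) \<le> 1/2"
    proof -
      have "(1/2::real)^(L+1) \<le> (1/2)^1" by (rule power_decreasing) auto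
      then show "0 \<le> 1/2 - (1/2::real)^(L+1)" by simp
      show "1/2 - (1/2::real)^(L+1) \<le> 1/2" by simp
    qed
    have b: "0 \<le> 1 - 1 / (real T + 1)" "1 - 1 / (real T + 1) \<le> 1" by (auto simp: field_simps)
    have "(1/2 - (1/2::real)^(L+1)) * (1 - 1 / (real T + 1)) \<le> 1/2 * 1"
      using a b by (intro mult_mono) auto
    then show ?thesis by simp
  qed
  finally show ?thesis .
qed

lemma finite_avoid:
  assumes "finite F" "F \<subseteq> Iset"
  shows "\<exists>S. \<forall>i\<in>F. S \<notin> (case i of (l, t) \<Rightarrow> Bad l t)"
proof -
  obtain L where L: "\<forall>x\<in>fst ` F. x \<le> L" using assms(1) finite_nat_set_iff_bounded_le by blast
  obtain T where T: "\<forall>x\<in>snd ` F. x \<le> T" using assms(1) finite_nat_set_iff_bounded_le by blast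
  define M where "M = T^16 + L"
  define w where "w = (\<lambda>(l::nat, t::nat). 1 / (2 ^ (l + 1) * (real t * (real t + 1))))"
  define U where "U = (\<Union>i\<in>F. (case i of (l, t) \<Rightarrow> Bad l t) \<inter> Pow {..<M})"
  have each: "real (card ((case i of (l, t) \<Rightarrow> Bad l t) \<inter> Pow {..<M})) \<le> 2 ^ M * w i" if i: "i \<in> F" for i
  proof -
    obtain l t where lt: "i = (l, t)" by (cases i)
    have lt1: "1 \<le> l" "Tl l \<le> t" using i lt assms(2) unfolding Iset_def by auto
    have "l \<le> L" "t \<le> T" using L T i lt by force+
    then have "t^16 + l \<le> M" unfolding M_def by (intro add_mono power_mono) auto
    then have "real (card (Bad l t \<inter> Pow {..<M})) \<le> 2 ^ M / (2 ^ (l + 1) * (real t * (real t + 1)))"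
      by (rule bad_bound[OF lt1])
    then show ?thesis unfolding lt w_def by simp
  qed
  have "card U \<le> (\<Sum>i\<in>F. card ((case i of (l, t) \<Rightarrow> Bad l t) \<inter> Pow {..<M}))"
    unfolding U_def by (rule card_UN_le[OF assms(1)])
  then have "real (card U) \<le> real (\<Sum>i\<in>F. card ((case i of (l, t) \<Rightarrow> Bad l t) \<inter> Pow {..<M}))"
    by (simp only: of_nat_le_iff)
  also have "\<dots> = (\<Sum>i\<in>F. real (card ((case i of (l, t) \<Rightarrow> Bad l t) \<inter> Pow {..<M})))"
    by (rule of_nat_sum)
  also have "\<dots> \<le> (\<Sum>i\<in>F. 2 ^ M * w i)" by (rule sum_mono) (rule each)
  also have "\<dots> = 2 ^ M * (\<Sum>i\<in>F. w i)" by (simp add: sum_distrib_left)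
  also have "\<dots> < 2 ^ M * 1"
    using weights_lt1[OF assms] unfolding w_def by (intro mult_strict_left_mono) auto
  finally have "real (card U) < 2 ^ M" by simp
  then have "card U < card (Pow {..<M::nat})" by (simp add: card_Pow)
  then have "\<not> Pow {..<M} \<subseteq> U"
    using card_mono[of U "Pow {..<M}"] unfolding U_def by auto
  then obtain S where S: "S \<in> Pow {..<M}" "S \<notin> U" by blast
  then show ?thesis unfolding U_def by auto
qed

lemma exists_S: "\<exists>S. \<forall>l t. 1 \<le> l \<longrightarrow> Tl l \<le> t \<longrightarrow> S \<notin> Bad l t"
proof -
  have "\<exists>S. \<forall>i\<in>Iset. S \<notin> (case i of (l, t) \<Rightarrow> Bad l t)"
  proof (rule koenig[where m="\<lambda>(l, t). t^16 + l"])
    fix i S S' assume "i \<in> Iset" "S \<inter> {..<(case i of (l, t) \<Rightarrow> t^16 + l)} = S' \<inter> {..<(case i of (l, t) \<Rightarrow> t^16 + l)}"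
      "S \<in> (case i of (l, t) \<Rightarrow> Bad l t)"
    then show "S' \<in> (case i of (l, t) \<Rightarrow> Bad l t)" by (cases i) (auto intro: Bad_dep)
  next
    fix F assume "finite F" "F \<subseteq> Iset"
    then show "\<exists>S. \<forall>i\<in>F. S \<notin> (case i of (l, t) \<Rightarrow> Bad l t)" by (rule finite_avoid)
  qed
  then show ?thesis unfolding Iset_def by auto
qed

lemma lam_abs: "\<bar>lam S r\<bar> = 1"
  using lam_pm[of S r] by auto

lemma TT_step:
  assumes "finite J" "N' \<le> N"
  shows "\<bar>TT J N S - TT J N' S\<bar> \<le> real (N - N')"
proof -
  have U: "{1..N} = {1..N'} \<union> {N'<..N}" "{1..N'} \<inter> {N'<..N} = {}" using assms(2) by auto
  have "TT J N S = TT J N' S + (\<Sum>i\<in>{N'<..N}. \<Prod>j\<in>J. lam S (i + j))"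
    unfolding TT_def U(1) by (rule sum.union_disjoint) (use U(2) in auto)
  then have "\<bar>TT J N S - TT J N' S\<bar> = \<bar>\<Sum>i\<in>{N'<..N}. \<Prod>j\<in>J. lam S (i + j)\<bar>" by simp
  also have "\<dots> \<le> (\<Sum>i\<in>{N'<..N}. \<bar>\<Prod>j\<in>J. lam S (i + j)\<bar>)" by (rule sum_abs)
  also have "\<dots> = (\<Sum>i\<in>{N'<..N}. 1)" by (simp add: abs_prod lam_abs)
  also have "\<dots> = real (N - N')" by simp
  finally show ?thesis .
qed

lemma pow_bound:
  fixes t :: real
  assumes "t \<ge> 1"
  shows "(t + 1) ^ Suc k \<le> t ^ Suc k + 3 ^ Suc k * t ^ k"
proof (induction k)
  case 0 then show ?case by simp
next
  case (Suc k)
  have tk: "t ^ k \<le> t ^ Suc k" using assms by (simp add: power_increasing)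
  have "(t + 1) ^ Suc (Suc k) = (t + 1) * (t + 1) ^ Suc k" by simp
  also have "\<dots> \<le> (t + 1) * (t ^ Suc k + 3 ^ Suc k * t ^ k)"
    using Suc assms by (intro mult_left_mono) auto
  also have "\<dots> = t ^ Suc (Suc k) + t ^ Suc k + 3 ^ Suc k * (t * t ^ k) + 3 ^ Suc k * t ^ k"
    by (simp add: algebra_simps)
  also have "\<dots> \<le> t ^ Suc (Suc k) + t ^ Suc k + 3 ^ Suc k * t ^ Suc k + 3 ^ Suc k * t ^ Suc k"
    using tk by simp
  also have "\<dots> \<le> t ^ Suc (Suc k) + 3 ^ Suc (Suc k) * t ^ Suc k"
  proof -
    have "1 \<le> (3::real) ^ Suc k" by (rule one_le_power) simp
    then have "t ^ Suc k \<le> 3 ^ Suc k * t ^ Suc k" using assms by simp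
    then show ?thesis by (simp add: algebra_simps)
  qed
  finally show ?case .
qed

lemma root_ex: "\<exists>t::nat. t^16 \<le> N \<and> N < (t+1)^16"
proof -
  have ex: "N < (N + 1)^16"
  proof -
    have "N + 1 \<le> (N + 1)^16" by (rule self_le_power) auto
    then show ?thesis by simp
  qed
  define t where "t = (LEAST t. N < (t + 1)^16)"
  have t1: "N < (t + 1)^16" unfolding t_def by (rule LeastI[of _ N]) (rule ex)
  have t2: "t^16 \<le> N"
  proof (cases t)
    case 0 then show ?thesis by simp
  next
    case (Suc s)
    have "\<not> N < (s + 1)^16"
    proof
      assume "N < (s + 1)^16"
      then have "t \<le> s" unfolding t_def by (rule Least_le)
      then show False using Suc by simp
    qed
    then show ?thesis using Suc by simp
  qed
  show ?thesis using t1 t2 by blast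
qed

lemma TT_limit:
  assumes good: "\<forall>l t. 1 \<le> l \<longrightarrow> Tl l \<le> t \<longrightarrow> S \<notin> Bad l t"
    and J: "finite J" "J \<noteq> {}"
  shows "(\<lambda>N. TT J N S / real N) \<longlonglongrightarrow> 0"
proof (rule LIMSEQ_I)
  fix r :: real assume r: "r > 0"
  define l where "l = Suc (Max J)"
  have Jl: "J \<subseteq> {..<l}" unfolding l_def using J Max_ge by fastforce
  have bnd: "\<bar>TT J (t^16) S\<bar> \<le> real (t^15)" if "Tl l \<le> t" for t
  proof -
    have "S \<notin> Bad l t" using good that unfolding l_def by auto
    then show ?thesis using Jl J unfolding Bad_def by auto
  qed
  define C :: real where "C = 1 + 3^16"
  define k where "k = max (Tl l) (nat \<lceil>C / r\<rceil> + 1)"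
  have kT: "Tl l \<le> k" unfolding k_def by simp
  have kC: "C / r < real k"
  proof -
    have "C / r \<le> real (nat \<lceil>C / r\<rceil>)" by linarith
    also have "\<dots> < real (nat \<lceil>C / r\<rceil> + 1)" by simp
    also have "\<dots> \<le> real k" unfolding k_def by simp
    finally show ?thesis .
  qed
  show "\<exists>no. \<forall>n\<ge>no. norm (TT J n S / real n - 0) < r"
  proof (intro exI allI impI)
    fix N assume N: "N \<ge> k^16"
    obtain t where t: "t^16 \<le> N" "N < (t+1)^16" using root_ex by blast
    have tk: "t \<ge> k"
    proof (rule ccontr)
      assume "\<not> t \<ge> k"
      then have "t + 1 \<le> k" by simp
      then have p: "(t+1)^16 \<le> k^16" by (rule power_mono) auto
      show False using t(2) N p by linarith
    qed
    have t2: "t \<ge> 2" using tk kT Tl_ge(2)[of l] by simp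
    have tpos: "real t \<ge> 1" using t2 by simp
    have "\<bar>TT J N S\<bar> \<le> \<bar>TT J (t^16) S\<bar> + \<bar>TT J N S - TT J (t^16) S\<bar>" by linarith
    also have "\<dots> \<le> real (t^15) + real (N - t^16)"
      using bnd[of t] tk kT TT_step[OF J(1) t(1), of S] by (intro add_mono) auto
    also have "real (N - t^16) \<le> real ((t+1)^16) - real (t^16)"
    proof -
      have le1: "t^16 \<le> (t+1)^16" by (rule power_mono) auto
      have "N - t^16 \<le> (t+1)^16 - t^16" using t by linarith
      then have "real (N - t^16) \<le> real ((t+1)^16 - t^16)" by (simp only: of_nat_le_iff)
      also have "\<dots> = real ((t+1)^16) - real (t^16)" using le1 by (rule of_nat_diff)
      finally show ?thesis .
    qed
    also have "real ((t+1)^16) - real (t^16) \<le> 3^16 * real t ^ 15"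
      using pow_bound[OF tpos, of 15] by (simp add: add.commute)
    finally have "\<bar>TT J N S\<bar> \<le> C * real t ^ 15" unfolding C_def by (simp add: algebra_simps)
    moreover have "real t ^ 16 \<le> real N" using t(1) by (metis of_nat_le_iff of_nat_power)
    ultimately have "\<bar>TT J N S\<bar> / real N \<le> C * real t ^ 15 / real t ^ 16"
      using tpos by (intro frac_le) (auto simp: C_def)
    also have "\<dots> = C / real t" using tpos power_add[of "real t" 1 15] by (simp add: field_simps)
    also have "\<dots> \<le> C / real k" using tk tpos kT Tl_ge(2)[of l] unfolding C_def
      by (intro divide_left_mono) auto
    also have "\<dots> < r"
    proof -
      have kpos: "real k > 0" using kT Tl_ge(2)[of l] by simp
      have "C < r * real k" using kC r by (simp add: field_simps)
      then show ?thesis using kpos by (simp add: divide_less_eq mult.commute)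
    qed
    finally show "norm (TT J N S / real N - 0) < r" by simp
  qed
qed

lemma prod_of_bool_real: "finite X \<Longrightarrow> (\<Prod>x\<in>X. (of_bool (P x) :: real)) = of_bool (\<forall>x\<in>X. P x)"
  by (induction X rule: finite_induct) auto

definition sg :: "bool list \<Rightarrow> nat \<Rightarrow> real" where
  "sg w j = (if w ! j then -1 else 1)"

lemma factor_eq:
  assumes "k \<ge> 1"
  shows "(of_bool ((k \<in> {n. 1 \<le> n \<and> lam S n = -1}) = b) :: real) = ((if b then -1 else 1) * lam S k + 1) / 2"
  using lam_pm[of S k] assms by (cases b) auto

lemma indicator_expand:
  assumes i: "i \<ge> 1"
  shows "(of_bool (occurs_at (\<lambda>n. n \<in> {n. 1 \<le> n \<and> lam S n = -1}) w i) :: real) =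
         (1/2) ^ length w * (\<Sum>J\<in>Pow {..<length w}. (\<Prod>j\<in>J. sg w j) * (\<Prod>j\<in>J. lam S (i + j)))"
proof -
  let ?A = "{n. 1 \<le> n \<and> lam S n = -1}"
  let ?l = "length w"
  have occ: "occurs_at (\<lambda>n. n \<in> ?A) w i \<longleftrightarrow> (\<forall>j\<in>{..<?l}. (i + j \<in> ?A) = w ! j)"
    unfolding occurs_at_def by auto
  have "(of_bool (occurs_at (\<lambda>n. n \<in> ?A) w i) :: real) = of_bool (\<forall>j\<in>{..<?l}. (i + j \<in> ?A) = w ! j)"
    by (simp only: occ)
  also have "\<dots> = (\<Prod>j\<in>{..<?l}. (of_bool ((i + j \<in> ?A) = w ! j) :: real))"
    by (rule prod_of_bool_real[symmetric]) simp
  also have "\<dots> = (\<Prod>j\<in>{..<?l}. (sg w j * lam S (i + j) + 1) / 2)"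
    unfolding sg_def using i by (intro prod.cong refl factor_eq) simp
  also have "\<dots> = (\<Prod>j\<in>{..<?l}. sg w j * lam S (i + j) + 1) / 2 ^ ?l"
    by (simp add: prod_dividef)
  also have "(\<Prod>j\<in>{..<?l}. sg w j * lam S (i + j) + 1) =
             (\<Sum>J\<in>Pow {..<?l}. (\<Prod>j\<in>J. sg w j * lam S (i + j)) * (\<Prod>j\<in>{..<?l} - J. 1))"
    by (rule prod_add) simp
  also have "\<dots> = (\<Sum>J\<in>Pow {..<?l}. (\<Prod>j\<in>J. sg w j) * (\<Prod>j\<in>J. lam S (i + j)))"
    by (simp add: prod.distrib)
  finally have X: "(of_bool (occurs_at (\<lambda>n. n \<in> ?A) w i) :: real) =
      (\<Sum>J\<in>Pow {..<?l}. (\<Prod>j\<in>J. sg w j) * (\<Prod>j\<in>J. lam S (i + j))) / 2 ^ ?l" .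
  have gen: "\<And>Y::real. Y / 2 ^ n = (1/2) ^ n * Y" for n by (simp add: power_one_over)
  show ?thesis unfolding X by (rule gen)
qed

lemma TT_empty: "TT {} N S = real N"
  unfolding TT_def by simp

lemma normal_A:
  assumes good: "\<forall>l t. 1 \<le> l \<longrightarrow> Tl l \<le> t \<longrightarrow> S \<notin> Bad l t"
  shows "normal_set {n. 1 \<le> n \<and> lam S n = -1}"
  unfolding normal_set_def normal_seq_def
proof
  fix w :: "bool list"
  let ?A = "{n. 1 \<le> n \<and> lam S n = -1}"
  let ?l = "length w"
  let ?c = "\<lambda>J. \<Prod>j\<in>J. sg w j"
  have eq: "real (card {i \<in> {1..N}. occurs_at (\<lambda>n. n \<in> ?A) w i}) / real N =
        (1/2) ^ ?l * (\<Sum>J\<in>Pow {..<?l}. ?c J * (TT J N S / real N))" for N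
  proof -
    have "real (card {i \<in> {1..N}. occurs_at (\<lambda>n. n \<in> ?A) w i}) =
          (\<Sum>i\<in>{i \<in> {1..N}. occurs_at (\<lambda>n. n \<in> ?A) w i}. (1::real))"
      by simp
    also have "\<dots> = (\<Sum>i\<in>{1..N}. if occurs_at (\<lambda>n. n \<in> ?A) w i then 1 else 0)"
      by (rule sum.inter_filter) simp
    also have "\<dots> = (\<Sum>i\<in>{1..N}. (of_bool (occurs_at (\<lambda>n. n \<in> ?A) w i) :: real))"
      by (simp only: of_bool_def)
    also have "\<dots> = (\<Sum>i\<in>{1..N}. (1/2) ^ ?l * (\<Sum>J\<in>Pow {..<?l}. ?c J * (\<Prod>j\<in>J. lam S (i + j))))"
      by (intro sum.cong refl indicator_expand) auto
    also have "\<dots> = (1/2) ^ ?l * (\<Sum>i\<in>{1..N}. \<Sum>J\<in>Pow {..<?l}. ?c J * (\<Prod>j\<in>J. lam S (i + j)))"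
      by (simp only: sum_distrib_left)
    also have "\<dots> = (1/2) ^ ?l * (\<Sum>J\<in>Pow {..<?l}. \<Sum>i\<in>{1..N}. ?c J * (\<Prod>j\<in>J. lam S (i + j)))"
      by (subst sum.swap) (rule refl)
    also have "\<dots> = (1/2) ^ ?l * (\<Sum>J\<in>Pow {..<?l}. ?c J * TT J N S)"
      unfolding TT_def by (simp only: sum_distrib_left)
    finally have X: "real (card {i \<in> {1..N}. occurs_at (\<lambda>n. n \<in> ?A) w i}) =
        (1/2) ^ ?l * (\<Sum>J\<in>Pow {..<?l}. ?c J * TT J N S)" .
    have "(\<Sum>J\<in>Pow {..<?l}. ?c J * (TT J N S / real N)) = (\<Sum>J\<in>Pow {..<?l}. ?c J * TT J N S) / real N"
      by (simp only: times_divide_eq_right sum_divide_distrib)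
    then show ?thesis unfolding X by simp
  qed
  have lim: "(\<lambda>N. ?c J * (TT J N S / real N)) \<longlonglongrightarrow> ?c J * (if J = {} then 1 else 0)"
    if J: "J \<in> Pow {..<?l}" for J
  proof (cases "J = {}")
    case True
    have "(\<lambda>N. TT J N S / real N) \<longlonglongrightarrow> 1"
    proof (rule tendsto_eventually)
      show "\<forall>\<^sub>F N in sequentially. TT J N S / real N = 1"
        using eventually_ge_at_top[of "1::nat"] by eventually_elim (simp add: True TT_empty)
    qed
    then show ?thesis using True by (intro tendsto_mult_left) simp
  next
    case False
    have fJ: "finite J" using J by (auto intro: finite_subset)
    have "(\<lambda>N. TT J N S / real N) \<longlonglongrightarrow> 0" by (rule TT_limit[OF good fJ False])
    then show ?thesis using False by (intro tendsto_mult_left) simp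
  qed
  have "(\<lambda>N. (1/2) ^ ?l * (\<Sum>J\<in>Pow {..<?l}. ?c J * (TT J N S / real N))) \<longlonglongrightarrow>
        (1/2) ^ ?l * (\<Sum>J\<in>Pow {..<?l}. ?c J * (if J = {} then 1 else 0))"
    by (intro tendsto_mult_left tendsto_sum lim)
  also have "(\<Sum>J\<in>Pow {..<?l}. ?c J * (if J = {} then 1 else (0::real))) = 1"
  proof -
    have "(\<Sum>J\<in>Pow {..<?l}. ?c J * (if J = {} then 1 else (0::real))) = (\<Sum>J\<in>Pow {..<?l}. if J = {} then ?c J else 0)"
      by (intro sum.cong refl) auto
    also have "\<dots> = ?c {}" by (subst sum.delta) auto
    finally show ?thesis by simp
  qed
  finally have "(\<lambda>N. (1/2) ^ ?l * (\<Sum>J\<in>Pow {..<?l}. ?c J * (TT J N S / real N))) \<longlonglongrightarrow> (1/2) ^ ?l * 1" .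
  then show "(\<lambda>N. real (card {i \<in> {1..N}. occurs_at (\<lambda>n. n \<in> ?A) w i}) / real N) \<longlonglongrightarrow> (1/2) ^ ?l"
    by (simp only: eq mult_1_right)
qed

theorem mainTheorem3:
  shows "\<exists>A :: nat set. A \<subseteq> {1..} \<and> normal_set A \<and>
           \<not> (\<exists>x\<in>A. \<exists>y\<in>A. \<exists>z\<in>A. x * y = z)"
proof -
  obtain S where good: "\<forall>l t. 1 \<le> l \<longrightarrow> Tl l \<le> t \<longrightarrow> S \<notin> Bad l t" using exists_S by blast
  define A where "A = {n. 1 \<le> n \<and> lam S n = -1}"
  have "A \<subseteq> {1..}" unfolding A_def by auto
  moreover have "normal_set A" unfolding A_def by (rule normal_A[OF good])
  moreover have "\<not> (\<exists>x\<in>A. \<exists>y\<in>A. \<exists>z\<in>A. x * y = z)"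
  proof
    assume "\<exists>x\<in>A. \<exists>y\<in>A. \<exists>z\<in>A. x * y = z"
    then obtain x y z where xyz: "x \<in> A" "y \<in> A" "z \<in> A" "x * y = z" by blast
    then have "x \<noteq> 0" "y \<noteq> 0" unfolding A_def by auto
    then have "lam S (x * y) = lam S x * lam S y" by (rule lam_mult)
    then have "lam S z = lam S x * lam S y" using xyz(4) by simp
    also have "\<dots> = 1" using xyz(1,2) unfolding A_def by simp
    finally show False using xyz(3) unfolding A_def by simp
  qed
  ultimately show ?thesis by blast
qed

end
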